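(* Consider the setting described in the context. Minimizing the cost $I[S^K;Z^K]-h[H]$ over the variables $\Sigma^H>0$, $\Sigma^Z_K>0$ and block-diagonal $\tilde G_K=\mathrm{diag}(G(1),\dots,G(K))$ is equivalent to solving the following convex program: $$\min_{\Sigma^H,\ \Pi_K,\ \Sigma^Z_K,\ \tilde G_K}\ -\log\det(\Sigma^H)-\log\det(\Pi_K)\quad\text{s.t.}\quad \Pi_K\ge 0,\quad \begin{bmatrix}\Sigma^S_K-\Pi_K & (\Sigma^{SZ}_K)^\top\\ \Sigma^{SZ}_K & \Sigma^Z_K\end{bmatrix}\ge 0,$$ where $\Sigma^{SZ}_K=\tilde G_K\tilde C_KQ\tilde D_K^\top$ and $\Pi_K\in\mathbb{R}^{Kn_s\times Kn_s}$ is symmetric.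
   Context: Let $n_x,n_y,n_u,n_s,K\in\mathbb{N}$, $K\ge2$. Consider the system $X(k+1)=AX(k)+BU(k)+T(k)$, $Y(k)=CX(k)+W(k)$, $S(k)=DX(k)$ with $X(k)\in\mathbb{R}^{n_x}$, $Y(k)\in\mathbb{R}^{n_y}$, deterministic $U(k)\in\mathbb{R}^{n_u}$, $S(k)\in\mathbb{R}^{n_s}$, $D$ of full row rank; $T(k)$, $W(k)$ i.i.d. zero-mean Gaussian with covariances $\Sigma^T>0$, $\Sigma^W>0$; $X(1)\sim\mathcal{N}[\mu^X_1,\Sigma^X_1]$, $\Sigma^X_1>0$; all mutually independent. The disclosed output is $Z(k)=G(k)Y(k)+V(k)$ with $G(k)\in\mathbb{R}^{n_y\times n_y}$ deterministic and $V^K=(V(1)^\top,\dots,V(K)^\top)^\top$ zero-mean Gaussian, independent of everything else; the disclosed input is $R(k)=U(k)+H(k)$ where the stacked input noise $H\in\mathbb{R}^m$ is zero-mean Gaussian with covariance $\Sigma^H>0$, independent of everything else. Stacked vectors $Z^K,S^K$ collect $Z(1),\dots,Z(K)$ and $S(1),\dots,S(K)$. Let $\tilde C_K=I_K\otimes C$, $\tilde D_K=I_K\otimes D$, $F_K=\begin{bmatrix} I & A^\top &\cdots & (A^\top)^{K-1}\end{bmatrix}^\top$, $J_K\in\mathbb{R}^{Kn_x\times(K-1)n_x}$ with $(i,j)$ block $A^{i-j-1}$ if $i>j$ ($A^0=I$) and $\mathbf{0}$ otherwise, and $Q=F_K\Sigma^X_1F_K^\top+J_K(I_{K-1}\otimes\Sigma^T)J_K^\top$.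 Then $\Sigma^S_K=\tilde D_KQ\tilde D_K^\top$ is the covariance of $S^K$, $\Sigma^{SZ}_K=\tilde G_K\tilde C_KQ\tilde D_K^\top$ is the cross-covariance of $Z^K$ and $S^K$, and $\Sigma^Z_K$ denotes the covariance of $Z^K$ (which determines the covariance of $V^K$ via $\Sigma^V_K=\Sigma^Z_K-\tilde G_K(\tilde C_KQ\tilde C_K^\top+I_K\otimes\Sigma^W)\tilde G_K^\top$). Since all vectors are jointly Gaussian, the mutual information and differential entropy (logarithms base 2) are $I[S^K;Z^K]=\tfrac12\log\det\Sigma^S_K-\tfrac12\log\det\big(\Sigma^S_K-(\Sigma^{SZ}_K)^\top(\Sigma^Z_K)^{-1}\Sigma^{SZ}_K\big)$ and $h[H]=\tfrac12\log\det\Sigma^H+\tfrac m2+\tfrac m2\log(2\pi)$; the cost is regarded as a function of $(\Sigma^H,\Sigma^Z_K,\tilde G_K)$ through these formulas. *)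

theory Defs
  imports "Jordan_Normal_Form.Determinant" "Jordan_Normal_Form.DL_Rank"
          "Jordan_Normal_Form.Gauss_Jordan_Elimination"
begin

definition sym_mat :: "nat \<Rightarrow> real mat \<Rightarrow> bool" where
  "sym_mat n M \<longleftrightarrow> M \<in> carrier_mat n n \<and> M\<^sup>T = M"

definition psd_mat :: "nat \<Rightarrow> real mat \<Rightarrow> bool" where
  "psd_mat n M \<longleftrightarrow> sym_mat n M \<and> (\<forall>v \<in> carrier_vec n. v \<bullet> (M *\<^sub>v v) \<ge> 0)"

definition pd_mat :: "nat \<Rightarrow> real mat \<Rightarrow> bool" where
  "pd_mat n M \<longleftrightarrow> sym_mat n M \<and> (\<forall>v \<in> carrier_vec n. v \<noteq> 0\<^sub>v n \<longrightarrow> v \<bullet> (M *\<^sub>v v) > 0)"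

text \<open>Inverse of a square matrix (only used for invertible matrices).\<close>
definition inv_mat :: "real mat \<Rightarrow> real mat" where
  "inv_mat M = the (mat_inverse M)"

definition blockdiag :: "nat \<Rightarrow> nat \<Rightarrow> (nat \<Rightarrow> real mat) \<Rightarrow> real mat" where
  "blockdiag K n M = mat (K * n) (K * n)
     (\<lambda>(i, j). if i div n = j div n then M (i div n) $$ (i mod n, j mod n) else 0)"

definition kron_id :: "nat \<Rightarrow> real mat \<Rightarrow> real mat" where
  "kron_id K M = mat (K * dim_row M) (K * dim_col M)
     (\<lambda>(i, j). if i div dim_row M = j div dim_col M
               then M $$ (i mod dim_row M, j mod dim_col M) else 0)"

definition F_mat :: "nat \<Rightarrow> nat \<Rightarrow> real mat \<Rightarrow> real mat" where
  "F_mat K nx A = mat (K * nx) nx (\<lambda>(i, j). (A ^\<^sub>m (i div nx)) $$ (i mod nx, j))"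

text \<open>J_K of size (K nx) x ((K-1) nx), block (i,j) = A^(i-j-1) if i > j, else 0
  (block indices counted from 0; the same condition as with indices from 1).\<close>
definition J_mat :: "nat \<Rightarrow> nat \<Rightarrow> real mat \<Rightarrow> real mat" where
  "J_mat K nx A = mat (K * nx) ((K - 1) * nx)
     (\<lambda>(i, j). if i div nx > j div nx
               then (A ^\<^sub>m (i div nx - j div nx - 1)) $$ (i mod nx, j mod nx) else 0)"

definition Q_mat :: "nat \<Rightarrow> nat \<Rightarrow> real mat \<Rightarrow> real mat \<Rightarrow> real mat \<Rightarrow> real mat" where
  "Q_mat K nx A Sig1 SigT =
     F_mat K nx A * Sig1 * (F_mat K nx A)\<^sup>T
     + J_mat K nx A * kron_id (K - 1) SigT * (J_mat K nx A)\<^sup>T"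

definition SigS :: "nat \<Rightarrow> nat \<Rightarrow> real mat \<Rightarrow> real mat \<Rightarrow> real mat \<Rightarrow> real mat \<Rightarrow> real mat" where
  "SigS K nx A D Sig1 SigT = kron_id K D * Q_mat K nx A Sig1 SigT * (kron_id K D)\<^sup>T"

text \<open>\<Sigma>^SZ_K = G~ C~ Q D~^T, where G~ = diag(G(1),...,G(K)) (here G 0, ..., G (K-1)).\<close>
definition SigSZ :: "nat \<Rightarrow> nat \<Rightarrow> nat \<Rightarrow> real mat \<Rightarrow> real mat \<Rightarrow> real mat \<Rightarrow> real mat
    \<Rightarrow> real mat \<Rightarrow> (nat \<Rightarrow> real mat) \<Rightarrow> real mat" where
  "SigSZ K nx ny A C D Sig1 SigT G =
     blockdiag K ny G * kron_id K C * Q_mat K nx A Sig1 SigT * (kron_id K D)\<^sup>T"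

definition SigS_cond :: "nat \<Rightarrow> nat \<Rightarrow> nat \<Rightarrow> real mat \<Rightarrow> real mat \<Rightarrow> real mat \<Rightarrow> real mat
    \<Rightarrow> real mat \<Rightarrow> real mat \<Rightarrow> (nat \<Rightarrow> real mat) \<Rightarrow> real mat" where
  "SigS_cond K nx ny A C D Sig1 SigT SigZ G =
     SigS K nx A D Sig1 SigT
     - (SigSZ K nx ny A C D Sig1 SigT G)\<^sup>T * inv_mat SigZ * SigSZ K nx ny A C D Sig1 SigT G"

definition mutual_info :: "nat \<Rightarrow> nat \<Rightarrow> nat \<Rightarrow> real mat \<Rightarrow> real mat \<Rightarrow> real mat \<Rightarrow> real mat
    \<Rightarrow> real mat \<Rightarrow> real mat \<Rightarrow> (nat \<Rightarrow> real mat) \<Rightarrow> real" where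
  "mutual_info K nx ny A C D Sig1 SigT SigZ G =
     1/2 * log 2 (det (SigS K nx A D Sig1 SigT))
     - 1/2 * log 2 (det (SigS_cond K nx ny A C D Sig1 SigT SigZ G))"

text \<open>Differential entropy h[H] of H ~ N(0, SigH), H in R^m (base-2 logarithms).\<close>
definition diff_entropy :: "nat \<Rightarrow> real mat \<Rightarrow> real" where
  "diff_entropy m SigH = 1/2 * log 2 (det SigH) + real m / 2 + real m / 2 * log 2 (2 * pi)"

definition cost :: "nat \<Rightarrow> nat \<Rightarrow> nat \<Rightarrow> nat \<Rightarrow> real mat \<Rightarrow> real mat \<Rightarrow> real mat \<Rightarrow> real mat
    \<Rightarrow> real mat \<Rightarrow> real mat \<Rightarrow> real mat \<Rightarrow> (nat \<Rightarrow> real mat) \<Rightarrow> real" where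
  "cost K nx ny m A C D Sig1 SigT SigH SigZ G =
     mutual_info K nx ny A C D Sig1 SigT SigZ G - diff_entropy m SigH"

text \<open>Feasible set of the original problem: \<Sigma>^H > 0, \<Sigma>^Z_K > 0, G~ block diagonal with
  ny x ny blocks, and (domain of the cost formula) the conditional covariance
  \<Sigma>^S_K - (\<Sigma>^SZ_K)^T (\<Sigma>^Z_K)^{-1} \<Sigma>^SZ_K positive definite.\<close>
definition orig_feasible :: "nat \<Rightarrow> nat \<Rightarrow> nat \<Rightarrow> nat \<Rightarrow> nat \<Rightarrow> real mat \<Rightarrow> real mat \<Rightarrow> real mat
    \<Rightarrow> real mat \<Rightarrow> real mat \<Rightarrow> real mat \<Rightarrow> real mat \<Rightarrow> (nat \<Rightarrow> real mat) \<Rightarrow> bool" where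
  "orig_feasible K nx ny ns m A C D Sig1 SigT SigH SigZ G \<longleftrightarrow>
     pd_mat m SigH \<and> pd_mat (K * ny) SigZ \<and> (\<forall>k < K. G k \<in> carrier_mat ny ny) \<and>
     pd_mat (K * ns) (SigS_cond K nx ny A C D Sig1 SigT SigZ G)"

definition conv_obj :: "real mat \<Rightarrow> real mat \<Rightarrow> real" where
  "conv_obj SigH PiK = - log 2 (det SigH) - log 2 (det PiK)"

text \<open>Feasible set of the convex program: \<Sigma>^H > 0, \<Sigma>^Z_K > 0, G~ block diagonal,
  \<Pi>_K symmetric with \<Pi>_K \<ge> 0, the LMI, and det \<Pi>_K > 0 (domain of -log det \<Pi>_K).\<close>
definition conv_feasible :: "nat \<Rightarrow> nat \<Rightarrow> nat \<Rightarrow> nat \<Rightarrow> nat \<Rightarrow> real mat \<Rightarrow> real mat \<Rightarrow> real mat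
    \<Rightarrow> real mat \<Rightarrow> real mat \<Rightarrow> real mat \<Rightarrow> real mat \<Rightarrow> real mat \<Rightarrow> (nat \<Rightarrow> real mat) \<Rightarrow> bool" where
  "conv_feasible K nx ny ns m A C D Sig1 SigT SigH PiK SigZ G \<longleftrightarrow>
     pd_mat m SigH \<and> pd_mat (K * ny) SigZ \<and> (\<forall>k < K. G k \<in> carrier_mat ny ny) \<and>
     psd_mat (K * ns) PiK \<and> det PiK > 0 \<and>
     psd_mat (K * ns + K * ny)
       (four_block_mat (SigS K nx A D Sig1 SigT - PiK) (SigSZ K nx ny A C D Sig1 SigT G)\<^sup>T
                       (SigSZ K nx ny A C D Sig1 SigT G) SigZ)"

end

theory Submission
  imports Defs
begin

definition qf :: "real mat \<Rightarrow> real vec \<Rightarrow> real" where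
  "qf M v = v \<bullet> (M *\<^sub>v v)"

lemma quad_four_block:
  fixes X B Z Zi :: "real mat"
  assumes X: "X \<in> carrier_mat n n" and B: "B \<in> carrier_mat k n" and Z: "Z \<in> carrier_mat k k"
    and Zi: "Zi \<in> carrier_mat k k" and ZZi: "Z * Zi = 1\<^sub>m k" and Zs: "Z\<^sup>T = Z"
    and v: "v \<in> carrier_vec n" and w: "w \<in> carrier_vec k"
  shows "qf (four_block_mat X B\<^sup>T B Z) (v @\<^sub>v w) =
     qf X v - (B *\<^sub>v v) \<bullet> (Zi *\<^sub>v (B *\<^sub>v v)) + qf Z (w + Zi *\<^sub>v (B *\<^sub>v v))"
proof -
  define u where "u = Zi *\<^sub>v (B *\<^sub>v v)"
  have Bv: "B *\<^sub>v v \<in> carrier_vec k" using B v by auto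
  have u: "u \<in> carrier_vec k" using Zi Bv u_def by auto
  have Zu: "Z *\<^sub>v u = B *\<^sub>v v" unfolding u_def
    using assoc_mult_mat_vec[OF Z Zi Bv, symmetric] ZZi Bv by simp
  have BT: "v \<bullet> (B\<^sup>T *\<^sub>v w) = w \<bullet> (B *\<^sub>v v)"
    using transpose_vec_mult_scalar[OF B v w] comm_scalar_prod[OF v, of "B\<^sup>T *\<^sub>v w"] B w by auto
  have ZT: "u \<bullet> (Z *\<^sub>v w) = w \<bullet> (Z *\<^sub>v u)"
    using transpose_vec_mult_scalar[OF Z w u] Zs comm_scalar_prod[OF w, of "Z *\<^sub>v u"] Z u by auto
  have L: "qf (four_block_mat X B\<^sup>T B Z) (v @\<^sub>v w) = qf X v + v \<bullet> (B\<^sup>T *\<^sub>v w) + w \<bullet> (B *\<^sub>v v) + qf Z w"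
    unfolding qf_def
    apply (subst four_block_mat_mult_vec[OF X _ B Z v w])
     apply (use B in simp)
    apply (subst scalar_prod_append[of _ n _ k])
    using X B Z v w
        apply (auto simp: scalar_prod_add_distrib[of _ n] scalar_prod_add_distrib[of _ k])
    done
  have R: "qf Z (w + u) = qf Z w + w \<bullet> (Z *\<^sub>v u) + u \<bullet> (Z *\<^sub>v w) + u \<bullet> (Z *\<^sub>v u)"
    unfolding qf_def using Z w u
    by (simp add: mult_add_distrib_mat_vec[OF Z w u] add_scalar_prod_distrib[of _ k]
        scalar_prod_add_distrib[of _ k])
  have uu: "u \<bullet> (Z *\<^sub>v u) = (B *\<^sub>v v) \<bullet> u" using Zu comm_scalar_prod[OF u Bv] by simp
  show ?thesis unfolding u_def[symmetric] L R using BT ZT Zu uu by simp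
qed


lemma qf_minus:
  assumes "A \<in> carrier_mat n n" "B \<in> carrier_mat n n" "v \<in> carrier_vec n"
  shows "qf (A - B) v = qf A v - qf B v"
  unfolding qf_def using assms
  by (simp add: minus_mult_distrib_mat_vec scalar_prod_minus_distrib[of _ n])

lemma qf_schur:
  fixes X B Zi :: "real mat"
  assumes X: "X \<in> carrier_mat n n" and B: "B \<in> carrier_mat k n" 
    and Zi: "Zi \<in> carrier_mat k k" and v: "v \<in> carrier_vec n"
  shows "qf (X - B\<^sup>T * Zi * B) v = qf X v - (B *\<^sub>v v) \<bullet> (Zi *\<^sub>v (B *\<^sub>v v))"
proof -
  have c: "B\<^sup>T * Zi * B \<in> carrier_mat n n" using B Zi by auto
  have "qf (B\<^sup>T * Zi * B) v = v \<bullet> (B\<^sup>T *\<^sub>v (Zi *\<^sub>v (B *\<^sub>v v)))"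
  proof -
    have "(B\<^sup>T * Zi * B) *\<^sub>v v = (B\<^sup>T * Zi) *\<^sub>v (B *\<^sub>v v)"
      by (rule assoc_mult_mat_vec[of _ n k], use B Zi v in auto)
    also have "\<dots> = B\<^sup>T *\<^sub>v (Zi *\<^sub>v (B *\<^sub>v v))"
      by (rule assoc_mult_mat_vec[of _ n k], use B Zi v in auto)
    finally show ?thesis unfolding qf_def by simp
  qed
  also have "\<dots> = (B *\<^sub>v v) \<bullet> (Zi *\<^sub>v (B *\<^sub>v v))"
    using transpose_vec_mult_scalar[OF B v, of "Zi *\<^sub>v (B *\<^sub>v v)"] 
      comm_scalar_prod[OF v, of "B\<^sup>T *\<^sub>v (Zi *\<^sub>v (B *\<^sub>v v))"] B Zi v
      comm_scalar_prod[of "B *\<^sub>v v" k "Zi *\<^sub>v (B *\<^sub>v v)"] by auto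
  finally show ?thesis using qf_minus[OF X c v] by simp
qed

lemma qf_zero: "M \<in> carrier_mat n n \<Longrightarrow> qf M (0\<^sub>v n) = 0"
  unfolding qf_def by simp

lemma four_block_transpose_sym:
  assumes X: "X \<in> carrier_mat n n" and B: "B \<in> carrier_mat k n" and Z: "Z \<in> carrier_mat k k"
  shows "(four_block_mat X B\<^sup>T B Z)\<^sup>T = four_block_mat X\<^sup>T B\<^sup>T B Z\<^sup>T"
  using transpose_four_block_mat[OF X _ B Z] B by simp

lemma sym_four_block_iff:
  assumes X: "X \<in> carrier_mat n n" and B: "B \<in> carrier_mat k n" and Z: "Z \<in> carrier_mat k k"
  shows "sym_mat (n + k) (four_block_mat X B\<^sup>T B Z) \<longleftrightarrow> X\<^sup>T = X \<and> Z\<^sup>T = Z"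
proof
  assume s: "sym_mat (n + k) (four_block_mat X B\<^sup>T B Z)"
  hence e: "four_block_mat X\<^sup>T B\<^sup>T B Z\<^sup>T = four_block_mat X B\<^sup>T B Z"
    unfolding sym_mat_def using four_block_transpose_sym[OF X B Z] by simp
  have "X\<^sup>T = X"
  proof (rule eq_matI)
    fix i j assume "i < dim_row X" "j < dim_col X"
    then show "X\<^sup>T $$ (i, j) = X $$ (i, j)"
      using arg_cong[OF e, of "\<lambda>M. M $$ (i,j)"] X B Z by simp
  qed (use X in auto)
  moreover have "Z\<^sup>T = Z"
  proof (rule eq_matI)
    fix i j assume "i < dim_row Z" "j < dim_col Z"
    then show "Z\<^sup>T $$ (i, j) = Z $$ (i, j)"
      using arg_cong[OF e, of "\<lambda>M. M $$ (i+n,j+n)"] X B Z by simp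
  qed (use Z in auto)
  ultimately show "X\<^sup>T = X \<and> Z\<^sup>T = Z" by simp
next
  assume "X\<^sup>T = X \<and> Z\<^sup>T = Z"
  then show "sym_mat (n + k) (four_block_mat X B\<^sup>T B Z)"
    unfolding sym_mat_def using four_block_transpose_sym[OF X B Z] X B Z by auto
qed

lemma det_schur:
  fixes X B Z Zi :: "real mat"
  assumes X: "X \<in> carrier_mat n n" and B: "B \<in> carrier_mat k n" and Z: "Z \<in> carrier_mat k k"
    and Zi: "Zi \<in> carrier_mat k k" and ZZi: "Z * Zi = 1\<^sub>m k"
  shows "det (four_block_mat X B\<^sup>T B Z) = det (X - B\<^sup>T * Zi * B) * det Z"
proof -
  define N where "N = four_block_mat (1\<^sub>m n) (0\<^sub>m n k) (- (Zi * B)) (1\<^sub>m k)"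
  have BT: "B\<^sup>T \<in> carrier_mat n k" using B by simp
  have ZiB: "Zi * B \<in> carrier_mat k n" using Zi B by simp
  have M: "four_block_mat X B\<^sup>T B Z \<in> carrier_mat (n+k) (n+k)" using X Z BT B by auto
  have Nc: "N \<in> carrier_mat (n+k) (n+k)" unfolding N_def using ZiB by auto
  have dN: "det N = 1" unfolding N_def
    by (subst det_four_block_mat_upper_right_zero[of _ n _ k], use ZiB in auto)
  have e1: "X * 1\<^sub>m n + B\<^sup>T * - (Zi * B) = X - B\<^sup>T * Zi * B"
    using X BT Zi B ZiB by (simp add: add_uminus_minus_mat[of _ n n] assoc_mult_mat[of _ n k _ k _ n])
  have e2: "B * 1\<^sub>m n + Z * - (Zi * B) = 0\<^sub>m k n"
  proof -
    have "Z * (Zi * B) = B" using assoc_mult_mat[OF Z Zi B, symmetric] ZZi B by simp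
    then have "Z * - (Zi * B) = - B" using Z Zi B by simp
    then show ?thesis using B Z ZiB by (simp add: add_uminus_minus_mat[of _ k n])
  qed
  have e3: "X * 0\<^sub>m n k + B\<^sup>T * 1\<^sub>m k = B\<^sup>T" using X BT by simp
  have e4: "B * 0\<^sub>m n k + Z * 1\<^sub>m k = Z" using B Z by simp
  have prod: "four_block_mat X B\<^sup>T B Z * N = four_block_mat (X - B\<^sup>T * Zi * B) B\<^sup>T (0\<^sub>m k n) Z"
    unfolding N_def
    by (subst mult_four_block_mat[OF X BT B Z _ _ _ _], use ZiB in \<open>auto simp: e1 e2 e3 e4\<close>)
  have "det (four_block_mat X B\<^sup>T B Z) = det (four_block_mat X B\<^sup>T B Z) * det N" using dN by simp
  also have "\<dots> = det (four_block_mat X B\<^sup>T B Z * N)" by (rule det_mult[OF M Nc, symmetric])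
  also have "\<dots> = det (X - B\<^sup>T * Zi * B) * det Z" unfolding prod
    by (rule det_four_block_mat_lower_left_zero[of _ n _ k], use X BT Zi B Z in auto)
  finally show ?thesis .
qed

lemma psd_det_pd:
  assumes P: "psd_mat n M" and d: "det M \<noteq> 0"
  shows "pd_mat n M"
proof -
  have M: "M \<in> carrier_mat n n" and Ms: "M\<^sup>T = M" and nn: "\<And>v. v \<in> carrier_vec n \<Longrightarrow> qf M v \<ge> 0"
    using P unfolding psd_mat_def sym_mat_def qf_def by auto
  have "qf M v > 0" if v: "v \<in> carrier_vec n" "v \<noteq> 0\<^sub>v n" for v
  proof (rule ccontr)
    assume "\<not> qf M v > 0"
    hence q0: "qf M v = 0" using nn[OF v(1)] by simp
    define w where "w = M *\<^sub>v v"
    have w: "w \<in> carrier_vec n" using M v w_def by simp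
    have sym1: "v \<bullet> (M *\<^sub>v w) = w \<bullet> w"
      using transpose_vec_mult_scalar[OF M w v(1)] Ms w_def comm_scalar_prod[OF w, of "M *\<^sub>v v"] M v w
      by auto
    have exp: "qf M (v + t \<cdot>\<^sub>v w) = 2 * t * (w \<bullet> w) + t * t * qf M w" for t
    proof -
      have "qf M (v + t \<cdot>\<^sub>v w) = (v + t \<cdot>\<^sub>v w) \<bullet> (M *\<^sub>v v + t \<cdot>\<^sub>v (M *\<^sub>v w))"
        unfolding qf_def using M v w by (simp add: mult_add_distrib_mat_vec[of _ n n] mult_mat_vec)
      also have "\<dots> = qf M v + t * (v \<bullet> (M *\<^sub>v w)) + t * (w \<bullet> (M *\<^sub>v v)) + t * t * qf M w"
        unfolding qf_def using M v w
        by (simp add: add_scalar_prod_distrib[of _ n] scalar_prod_add_distrib[of _ n] algebra_simps)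
      finally show ?thesis using q0 sym1 w_def by simp
    qed
    define c where "c = w \<bullet> w"
    define d where "d = qf M w"
    have c0: "c \<ge> 0" unfolding c_def scalar_prod_def by (auto intro: sum_nonneg)
    have d0: "d \<ge> 0" unfolding d_def using nn[OF w] .
    define t where "t = - c / (d + 1)"
    have td: "t * (d + 1) = - c" unfolding t_def using d0 by simp
    have "0 \<le> qf M (v + t \<cdot>\<^sub>v w)" using nn v w by simp
    hence h: "0 \<le> 2 * t * c + t * t * d"
      using exp unfolding c_def d_def by simp
    have "t * (t * (d + 1)) = t * (- c)" using td by simp
    hence "2 * t * c + t * t * d = t * c - t * t" using td by (simp add: algebra_simps)
    moreover have "t \<le> 0" unfolding t_def using c0 d0 by simp
    hence "t * c \<le> 0" using c0 by (simp add: mult_nonpos_nonneg)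
    moreover have "c * t = t * c" by simp
    ultimately have "t * t \<le> 0" using h by linarith
    moreover have "t * t \<ge> 0" by simp
    ultimately have "t * t = 0" by linarith
    hence "t = 0" by simp
    hence "c = 0" using td by simp
    hence "w = 0\<^sub>v n"
    proof -
      assume "c = 0"
      hence "(\<Sum>i = 0..<n. w $ i * w $ i) = 0" unfolding c_def scalar_prod_def using w by simp
      hence "\<forall>i\<in>{0..<n}. w $ i * w $ i = 0" by (subst (asm) sum_nonneg_eq_0_iff) auto
      thus ?thesis using w by (intro eq_vecI) auto
    qed
    hence "det M = 0" using det_0_iff_vec_prod_zero_field[OF M] v w_def by auto
    thus False using d by simp
  qed
  thus ?thesis using P unfolding pd_mat_def psd_mat_def qf_def by auto
qed

lemma pd_det_nz:
  assumes P: "pd_mat n M" shows "det M \<noteq> 0"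
proof
  assume "det M = 0"
  moreover have M: "M \<in> carrier_mat n n" using P unfolding pd_mat_def sym_mat_def by auto
  ultimately obtain v where v: "v \<in> carrier_vec n" "v \<noteq> 0\<^sub>v n" "M *\<^sub>v v = 0\<^sub>v n"
    using det_0_iff_vec_prod_zero_field[OF M] by auto
  then have "v \<bullet> (M *\<^sub>v v) > 0" using P unfolding pd_mat_def by auto
  thus False using v by simp
qed

lemma pd_inv:
  assumes P: "pd_mat n M"
  shows "M * inv_mat M = 1\<^sub>m n \<and> inv_mat M * M = 1\<^sub>m n \<and> inv_mat M \<in> carrier_mat n n
     \<and> (inv_mat M)\<^sup>T = inv_mat M"
proof -
  have M: "M \<in> carrier_mat n n" and Ms: "M\<^sup>T = M" using P unfolding pd_mat_def sym_mat_def by auto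
  have "M \<in> Units (ring_mat TYPE(real) n n)" using det_non_zero_imp_unit[OF M pd_det_nz[OF P]] .
  hence "mat_inverse M \<noteq> None" using mat_inverse(1)[OF M, where b=n] by auto
  then obtain Mi where mi: "mat_inverse M = Some Mi" by auto
  have I: "M * Mi = 1\<^sub>m n" "Mi * M = 1\<^sub>m n" "Mi \<in> carrier_mat n n"
    using mat_inverse(2)[OF M mi] by auto
  have "inv_mat M = Mi" unfolding inv_mat_def mi by simp
  moreover have "Mi\<^sup>T = Mi"
  proof -
    have "Mi\<^sup>T * M = 1\<^sub>m n" using transpose_mult[OF M I(3)] I Ms by (metis transpose_one)
    hence "Mi\<^sup>T = Mi\<^sup>T * (M * Mi)" using I M by simp
    also have "\<dots> = (Mi\<^sup>T * M) * Mi" using I M by (simp add: assoc_mult_mat[of _ n n _ n _ n])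
    also have "\<dots> = Mi" using \<open>Mi\<^sup>T * M = 1\<^sub>m n\<close> I by simp
    finally show ?thesis .
  qed
  ultimately show ?thesis using I by simp
qed


lemma schur_q1:
  fixes X B Z Zi :: "real mat"
  assumes X: "X \<in> carrier_mat n n" and B: "B \<in> carrier_mat k n" and Z: "Z \<in> carrier_mat k k"
    and Zi: "Zi \<in> carrier_mat k k" and ZZi: "Z * Zi = 1\<^sub>m k" and Zs: "Z\<^sup>T = Z"
    and v: "v \<in> carrier_vec n"
  shows "qf (X - B\<^sup>T * Zi * B) v = qf (four_block_mat X B\<^sup>T B Z) (v @\<^sub>v (- (Zi *\<^sub>v (B *\<^sub>v v))))"
proof -
  have u: "Zi *\<^sub>v (B *\<^sub>v v) \<in> carrier_vec k" using Zi B v by simp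
  have "- (Zi *\<^sub>v (B *\<^sub>v v)) + Zi *\<^sub>v (B *\<^sub>v v) = 0\<^sub>v k" using u by simp
  then show ?thesis
    using quad_four_block[OF X B Z Zi ZZi Zs v, of "- (Zi *\<^sub>v (B *\<^sub>v v))"] u
      qf_schur[OF X B Zi v] qf_zero[OF Z] by simp
qed

lemma schur_q2:
  fixes X B Z Zi :: "real mat"
  assumes X: "X \<in> carrier_mat n n" and B: "B \<in> carrier_mat k n" and Z: "Z \<in> carrier_mat k k"
    and Zi: "Zi \<in> carrier_mat k k" and ZZi: "Z * Zi = 1\<^sub>m k" and Zs: "Z\<^sup>T = Z"
    and Zp: "\<And>y. y \<in> carrier_vec k \<Longrightarrow> qf Z y \<ge> 0"
    and v: "v \<in> carrier_vec n" and w: "w \<in> carrier_vec k"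
  shows "qf (X - B\<^sup>T * Zi * B) v \<le> qf (four_block_mat X B\<^sup>T B Z) (v @\<^sub>v w)"
  using quad_four_block[OF X B Z Zi ZZi Zs v w] qf_schur[OF X B Zi v] Zp[of "w + Zi *\<^sub>v (B *\<^sub>v v)"]
    Zi B v w by simp

lemma BZB_sym:
  fixes B Zi :: "real mat"
  assumes B: "B \<in> carrier_mat k n" and Zi: "Zi \<in> carrier_mat k k" and Zis: "Zi\<^sup>T = Zi"
  shows "(B\<^sup>T * Zi * B)\<^sup>T = B\<^sup>T * Zi * B"
    using transpose_mult[of "B\<^sup>T * Zi" n k B n] transpose_mult[of "B\<^sup>T" n k Zi k] B Zi Zis
    by (simp add: assoc_mult_mat[of _ n k _ k _ n])

lemma schur_sym:
  fixes X B Zi :: "real mat"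
  assumes X: "X \<in> carrier_mat n n" and B: "B \<in> carrier_mat k n"
    and Zi: "Zi \<in> carrier_mat k k" and Xs: "X\<^sup>T = X" and Zis: "Zi\<^sup>T = Zi"
  shows "(X - B\<^sup>T * Zi * B)\<^sup>T = X - B\<^sup>T * Zi * B"
proof -
  have "(B\<^sup>T * Zi * B)\<^sup>T = B\<^sup>T * Zi * B"
    using transpose_mult[of "B\<^sup>T * Zi" n k B n] transpose_mult[of "B\<^sup>T" n k Zi k] B Zi Zis
    by (simp add: assoc_mult_mat[of _ n k _ k _ n])
  then show ?thesis using transpose_minus[OF X, of "B\<^sup>T * Zi * B"] B Zi Xs by simp
qed

lemma psd_schur_iff:
  fixes X B Z Zi :: "real mat"
  assumes X: "X \<in> carrier_mat n n" and B: "B \<in> carrier_mat k n" and Z: "Z \<in> carrier_mat k k"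
    and Zi: "Zi \<in> carrier_mat k k" and ZZi: "Z * Zi = 1\<^sub>m k" and Zs: "Z\<^sup>T = Z" and Zis: "Zi\<^sup>T = Zi"
    and Zp: "\<And>y. y \<in> carrier_vec k \<Longrightarrow> qf Z y \<ge> 0"
  shows "psd_mat (n + k) (four_block_mat X B\<^sup>T B Z) \<longleftrightarrow> psd_mat n (X - B\<^sup>T * Zi * B)"
proof
  assume p: "psd_mat (n + k) (four_block_mat X B\<^sup>T B Z)"
  hence Xs: "X\<^sup>T = X" using sym_four_block_iff[OF X B Z] unfolding psd_mat_def by simp
  have "qf (X - B\<^sup>T * Zi * B) v \<ge> 0" if v: "v \<in> carrier_vec n" for v
    unfolding schur_q1[OF X B Z Zi ZZi Zs v] using p v Zi B unfolding psd_mat_def qf_def by simp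
  then show "psd_mat n (X - B\<^sup>T * Zi * B)"
    unfolding psd_mat_def sym_mat_def qf_def using schur_sym[OF X B Zi Xs Zis] X B Zi
    by (simp add: minus_carrier_mat)
next
  assume p: "psd_mat n (X - B\<^sup>T * Zi * B)"
  have Xs: "X\<^sup>T = X"
  proof -
    have "(X - B\<^sup>T * Zi * B)\<^sup>T = X - B\<^sup>T * Zi * B" using p unfolding psd_mat_def sym_mat_def by simp
    moreover have "(X - B\<^sup>T * Zi * B)\<^sup>T = X\<^sup>T - B\<^sup>T * Zi * B"
      using BZB_sym[OF B Zi Zis] transpose_minus[OF X, of "B\<^sup>T * Zi * B"] B Zi Zis X by simp
    ultimately have e: "X\<^sup>T - B\<^sup>T * Zi * B = X - B\<^sup>T * Zi * B" by simp
    show ?thesis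
    proof (rule eq_matI)
      fix i j assume "i < dim_row X" "j < dim_col X"
      then show "X\<^sup>T $$ (i, j) = X $$ (i, j)" using arg_cong[OF e, of "\<lambda>M. M $$ (i,j)"] X B Zi by simp
    qed (use X in auto)
  qed
  have "qf (four_block_mat X B\<^sup>T B Z) x \<ge> 0" if x: "x \<in> carrier_vec (n + k)" for x
  proof -
    have "x = vec_first x n @\<^sub>v vec_last x k" using x by simp
    moreover have "qf (X - B\<^sup>T * Zi * B) (vec_first x n) \<le> qf (four_block_mat X B\<^sup>T B Z) (vec_first x n @\<^sub>v vec_last x k)"
      by (rule schur_q2[OF X B Z Zi ZZi Zs Zp], auto)
    moreover have "qf (X - B\<^sup>T * Zi * B) (vec_first x n) \<ge> 0" using p unfolding psd_mat_def qf_def by simp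
    ultimately show ?thesis by simp
  qed
  then show "psd_mat (n + k) (four_block_mat X B\<^sup>T B Z)"
    unfolding psd_mat_def qf_def using sym_four_block_iff[OF X B Z] Xs Zs by simp
qed


lemma sym_split_last:
  fixes A :: "real mat"
  assumes A: "A \<in> carrier_mat (Suc n) (Suc n)" and As: "A\<^sup>T = A"
  shows "A = four_block_mat (mat n n (\<lambda>(i,j). A $$ (i,j))) (mat 1 n (\<lambda>(i,j). A $$ (n,j)))\<^sup>T
               (mat 1 n (\<lambda>(i,j). A $$ (n,j))) (mat 1 1 (\<lambda>_. A $$ (n,n)))"
proof -
  have sy: "A $$ (n, i) = A $$ (i, n)" if "i < Suc n" for i
    using arg_cong[OF As, of "\<lambda>M. M $$ (i,n)"] A that by simp
  show ?thesis
  proof (rule eq_matI)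
    fix i j assume i: "i < dim_row (four_block_mat (mat n n (\<lambda>(i,j). A $$ (i,j))) (mat 1 n (\<lambda>(i,j). A $$ (n,j)))\<^sup>T
               (mat 1 n (\<lambda>(i,j). A $$ (n,j))) (mat 1 1 (\<lambda>_. A $$ (n,n))))"
      and j: "j < dim_col (four_block_mat (mat n n (\<lambda>(i,j). A $$ (i,j))) (mat 1 n (\<lambda>(i,j). A $$ (n,j)))\<^sup>T
               (mat 1 n (\<lambda>(i,j). A $$ (n,j))) (mat 1 1 (\<lambda>_. A $$ (n,n))))"
    have i': "i < Suc n" and j': "j < Suc n" using i j by auto
    show "A $$ (i, j) = four_block_mat (mat n n (\<lambda>(i,j). A $$ (i,j))) (mat 1 n (\<lambda>(i,j). A $$ (n,j)))\<^sup>T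
               (mat 1 n (\<lambda>(i,j). A $$ (n,j))) (mat 1 1 (\<lambda>_. A $$ (n,n))) $$ (i, j)"
    proof (cases "i < n")
      case True
      then show ?thesis
      proof (cases "j < n")
        case False
        then have "j = n" using j' by simp
        then show ?thesis using True sy[of i] by simp
      qed simp
    next
      case False
      then have "i = n" using i' by simp
      show ?thesis
      proof (cases "j < n")
        case False
        then have "j = n" using j' by simp
        then show ?thesis using \<open>i = n\<close> by simp
      qed (use \<open>i = n\<close> in simp)
    qed
  qed (use A in auto)
qed

lemma qf_unit:
  fixes M :: "real mat"
  assumes M: "M \<in> carrier_mat N N" and i: "i < N"
  shows "qf M (unit_vec N i) = M $$ (i, i)"
  unfolding qf_def using M i by simp

lemma qf_one:
  fixes y :: "real vec"
  assumes y: "y \<in> carrier_vec 1"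
  shows "qf (mat 1 1 (\<lambda>_. a)) y = a * (y $ 0 * y $ 0)"
  unfolding qf_def using y by (simp add: scalar_prod_def)

lemma det_one_by_one: "det (mat 1 1 (\<lambda>_. a :: real)) = a"
  by (subst det_upper_triangular[of _ 1]) (auto simp: upper_triangular_def diag_mat_def)

lemma inv_one_by_one:
  assumes "a \<noteq> (0::real)"
  shows "mat 1 1 (\<lambda>_. a) * mat 1 1 (\<lambda>_. 1 / a) = 1\<^sub>m 1"
  by (rule eq_matI) (use assms in \<open>auto simp: scalar_prod_def\<close>)

lemma append_nonzero:
  assumes v: "v \<in> carrier_vec n" and w: "w \<in> carrier_vec k" and nz: "v \<noteq> 0\<^sub>v n"
  shows "v @\<^sub>v w \<noteq> 0\<^sub>v (n + k)"
proof
  assume e: "v @\<^sub>v w = 0\<^sub>v (n + k)"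
  have "v = 0\<^sub>v n"
  proof (rule eq_vecI)
    fix i assume "i < dim_vec (0\<^sub>v n)"
    then show "v $ i = 0\<^sub>v n $ i" using arg_cong[OF e, of "\<lambda>x. x $ i"] v w by simp
  qed (use v in simp)
  then show False using nz by simp
qed

lemma det_mono:
  fixes A B :: "real mat"
  assumes "A \<in> carrier_mat n n" "A\<^sup>T = A" "pd_mat n B"
    "\<And>v. v \<in> carrier_vec n \<Longrightarrow> qf B v \<le> qf A v"
  shows "0 < det B \<and> det B \<le> det A"
  using assms
proof (induction n arbitrary: A B)
  case 0
  then show ?case unfolding pd_mat_def sym_mat_def by simp
next
  case (Suc n)
  note A = Suc.prems(1) and As = Suc.prems(2) and Bp = Suc.prems(3) and le = Suc.prems(4)
  have B: "B \<in> carrier_mat (Suc n) (Suc n)" and Bs: "B\<^sup>T = B" using Bp unfolding pd_mat_def sym_mat_def by auto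
  define XA where "XA = mat n n (\<lambda>(i,j). A $$ (i,j))"
  define RA where "RA = mat 1 n (\<lambda>(i,j). A $$ (n,j))"
  define a where "a = A $$ (n,n)"
  define XB where "XB = mat n n (\<lambda>(i,j). B $$ (i,j))"
  define RB where "RB = mat 1 n (\<lambda>(i,j). B $$ (n,j))"
  define b where "b = B $$ (n,n)"
  have Ae: "A = four_block_mat XA RA\<^sup>T RA (mat 1 1 (\<lambda>_. a))"
    unfolding XA_def RA_def a_def using sym_split_last[OF A As] .
  have Be: "B = four_block_mat XB RB\<^sup>T RB (mat 1 1 (\<lambda>_. b))"
    unfolding XB_def RB_def b_def using sym_split_last[OF B Bs] .
  have ub: "unit_vec (Suc n) n \<in> carrier_vec (Suc n)" "unit_vec (Suc n) n \<noteq> 0\<^sub>v (Suc n)"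
  proof -
    show "unit_vec (Suc n) n \<in> carrier_vec (Suc n)" by simp
    show "unit_vec (Suc n) n \<noteq> 0\<^sub>v (Suc n)"
    proof
      assume "unit_vec (Suc n) n = 0\<^sub>v (Suc n)"
      then have "unit_vec (Suc n) n $ n = 0\<^sub>v (Suc n) $ n" by simp
      then show False by simp
    qed
  qed
  have b0: "b > 0" using Bp ub qf_unit[OF B, of n] unfolding pd_mat_def qf_def b_def
    by (metis lessI)
  have ab: "b \<le> a" using le[OF ub(1)] qf_unit[OF B, of n] qf_unit[OF A, of n] unfolding a_def b_def by simp
  have a0: "a > 0" using ab b0 by simp
  define ZA where "ZA = mat 1 1 (\<lambda>_. a)"
  define ZiA where "ZiA = mat 1 1 (\<lambda>_. 1 / a)"
  define ZB where "ZB = mat 1 1 (\<lambda>_. b)"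
  define ZiB where "ZiB = mat 1 1 (\<lambda>_. 1 / b)"
  have XA: "XA \<in> carrier_mat n n" and RA: "RA \<in> carrier_mat 1 n" and ZA: "ZA \<in> carrier_mat 1 1"
    and ZiA: "ZiA \<in> carrier_mat 1 1" unfolding XA_def RA_def ZA_def ZiA_def by auto
  have XB: "XB \<in> carrier_mat n n" and RB: "RB \<in> carrier_mat 1 n" and ZB: "ZB \<in> carrier_mat 1 1"
    and ZiB: "ZiB \<in> carrier_mat 1 1" unfolding XB_def RB_def ZB_def ZiB_def by auto
  have ZZiA: "ZA * ZiA = 1\<^sub>m 1" unfolding ZA_def ZiA_def using inv_one_by_one a0 by simp
  have ZZiB: "ZB * ZiB = 1\<^sub>m 1" unfolding ZB_def ZiB_def using inv_one_by_one b0 by simp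
  have ZsA: "ZA\<^sup>T = ZA" "ZiA\<^sup>T = ZiA" and ZsB: "ZB\<^sup>T = ZB" "ZiB\<^sup>T = ZiB"
    unfolding ZA_def ZiA_def ZB_def ZiB_def by (auto intro!: eq_matI)
  have ZpA: "qf ZA y \<ge> 0" if "y \<in> carrier_vec 1" for y
    unfolding ZA_def using qf_one[OF that] a0 by simp
  have ZpB: "qf ZB y \<ge> 0" if "y \<in> carrier_vec 1" for y
    unfolding ZB_def using qf_one[OF that] b0 by simp
  have XAs: "XA\<^sup>T = XA" unfolding XA_def
  proof (rule eq_matI)
    fix i j assume "i < dim_row (mat n n (\<lambda>(i,j). A $$ (i,j)))" "j < dim_col (mat n n (\<lambda>(i,j). A $$ (i,j)))"
    then show "(mat n n (\<lambda>(i,j). A $$ (i,j)))\<^sup>T $$ (i, j) = mat n n (\<lambda>(i,j). A $$ (i,j)) $$ (i, j)"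
      using arg_cong[OF As, of "\<lambda>M. M $$ (i,j)"] A by simp
  qed auto
  have XBs: "XB\<^sup>T = XB" unfolding XB_def
  proof (rule eq_matI)
    fix i j assume "i < dim_row (mat n n (\<lambda>(i,j). B $$ (i,j)))" "j < dim_col (mat n n (\<lambda>(i,j). B $$ (i,j)))"
    then show "(mat n n (\<lambda>(i,j). B $$ (i,j)))\<^sup>T $$ (i, j) = mat n n (\<lambda>(i,j). B $$ (i,j)) $$ (i, j)"
      using arg_cong[OF Bs, of "\<lambda>M. M $$ (i,j)"] B by simp
  qed auto
  define SA where "SA = XA - RA\<^sup>T * ZiA * RA"
  define SB where "SB = XB - RB\<^sup>T * ZiB * RB"
  have SA: "SA \<in> carrier_mat n n" and SB: "SB \<in> carrier_mat n n"
    unfolding SA_def SB_def using XA XB RA RB ZiA ZiB by (auto intro!: minus_carrier_mat)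
  have SAs: "SA\<^sup>T = SA" unfolding SA_def by (rule schur_sym[OF XA RA ZiA XAs ZsA(2)])
  have SBs: "SB\<^sup>T = SB" unfolding SB_def by (rule schur_sym[OF XB RB ZiB XBs ZsB(2)])
  have Ae': "A = four_block_mat XA RA\<^sup>T RA ZA" using Ae unfolding ZA_def .
  have Be': "B = four_block_mat XB RB\<^sup>T RB ZB" using Be unfolding ZB_def .
  have SBpd: "pd_mat n SB"
  proof -
    have "qf SB v > 0" if v: "v \<in> carrier_vec n" "v \<noteq> 0\<^sub>v n" for v
    proof -
      have w: "- (ZiB *\<^sub>v (RB *\<^sub>v v)) \<in> carrier_vec 1" using ZiB RB v by simp
      have "qf SB v = qf B (v @\<^sub>v (- (ZiB *\<^sub>v (RB *\<^sub>v v))))"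
        unfolding SB_def Be' by (rule schur_q1[OF XB RB ZB ZiB ZZiB ZsB(1) v(1)])
      also have "\<dots> > 0"
      proof -
        have x: "v @\<^sub>v (- (ZiB *\<^sub>v (RB *\<^sub>v v))) \<in> carrier_vec (Suc n)"
          using append_carrier_vec[OF v(1) w] by simp
        show ?thesis using Bp append_nonzero[OF v(1) w v(2)] x unfolding pd_mat_def qf_def by simp
      qed
      finally show ?thesis .
    qed
    then show ?thesis unfolding pd_mat_def sym_mat_def qf_def using SB SBs by simp
  qed
  have SAB: "qf SB v \<le> qf SA v" if v: "v \<in> carrier_vec n" for v
  proof -
    define w where "w = - (ZiA *\<^sub>v (RA *\<^sub>v v))"
    have w: "w \<in> carrier_vec 1" unfolding w_def using ZiA RA v by simp
    have "qf SB v \<le> qf B (v @\<^sub>v w)" unfolding SB_def Be'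
      by (rule schur_q2[OF XB RB ZB ZiB ZZiB ZsB(1) ZpB v w])
    also have "\<dots> \<le> qf A (v @\<^sub>v w)"
    proof -
      have x: "v @\<^sub>v w \<in> carrier_vec (Suc n)" using append_carrier_vec[OF v w] by simp
      show ?thesis by (rule le[OF x])
    qed
    also have "\<dots> = qf SA v" unfolding SA_def Ae' w_def
      by (rule schur_q1[OF XA RA ZA ZiA ZZiA ZsA(1) v, symmetric])
    finally show ?thesis .
  qed
  have IH: "0 < det SB \<and> det SB \<le> det SA" by (rule Suc.IH[OF SA SAs SBpd SAB])
  have dA: "det A = det SA * a" unfolding Ae' SA_def
    using det_schur[OF XA RA ZA ZiA ZZiA] det_one_by_one unfolding ZA_def by simp
  have dB: "det B = det SB * b" unfolding Be' SB_def
    using det_schur[OF XB RB ZB ZiB ZZiB] det_one_by_one unfolding ZB_def by simp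
  show ?case unfolding dA dB using IH b0 ab by (auto intro: mult_mono)
qed


lemma pd_inv_props:
  assumes Zp: "pd_mat k Z"
  shows "Z \<in> carrier_mat k k" "Z\<^sup>T = Z" "inv_mat Z \<in> carrier_mat k k" "Z * inv_mat Z = 1\<^sub>m k"
    "(inv_mat Z)\<^sup>T = inv_mat Z" "\<And>y. y \<in> carrier_vec k \<Longrightarrow> qf Z y \<ge> 0"
proof -
  show "Z \<in> carrier_mat k k" "Z\<^sup>T = Z" using Zp unfolding pd_mat_def sym_mat_def by auto
  show "inv_mat Z \<in> carrier_mat k k" "Z * inv_mat Z = 1\<^sub>m k" "(inv_mat Z)\<^sup>T = inv_mat Z"
    using pd_inv[OF Zp] by auto
  fix y :: "real vec" assume y: "y \<in> carrier_vec k"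
  show "qf Z y \<ge> 0"
  proof (cases "y = 0\<^sub>v k")
    case True
    then show ?thesis using qf_zero \<open>Z \<in> carrier_mat k k\<close> by simp
  next
    case False
    then show ?thesis using Zp y unfolding pd_mat_def qf_def by (simp add: less_imp_le)
  qed
qed

lemma F1:
  fixes S T Z :: "real mat"
  assumes S: "S \<in> carrier_mat N N" and T: "T \<in> carrier_mat k N" and Zp: "pd_mat k Z"
    and Pp: "pd_mat N (S - T\<^sup>T * inv_mat Z * T)"
  shows "psd_mat (N + k) (four_block_mat (S - (S - T\<^sup>T * inv_mat Z * T)) T\<^sup>T T Z)"
    "psd_mat N (S - T\<^sup>T * inv_mat Z * T)" "det (S - T\<^sup>T * inv_mat Z * T) > 0"
proof -
  note Z = pd_inv_props[OF Zp]
  define Zi where "Zi = inv_mat Z"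
  define W where "W = T\<^sup>T * Zi * T"
  have W: "W \<in> carrier_mat N N" unfolding W_def using T Z(3) Zi_def by auto
  have e: "S - (S - W) = W" by (rule eq_matI) (use S W in auto)
  have e2: "W - T\<^sup>T * Zi * T = 0\<^sub>m N N" unfolding W_def using W W_def by simp
  have "psd_mat N (W - T\<^sup>T * Zi * T)" unfolding e2 psd_mat_def sym_mat_def
    by (auto simp: scalar_prod_def mult_mat_vec_def)
  then have "psd_mat (N + k) (four_block_mat W T\<^sup>T T Z)"
    using psd_schur_iff[OF W T Z(1) Z(3) Z(4) Z(2) Z(5) Z(6)] unfolding Zi_def by simp
  then show "psd_mat (N + k) (four_block_mat (S - (S - T\<^sup>T * inv_mat Z * T)) T\<^sup>T T Z)"
    using e unfolding W_def Zi_def by simp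
  show "psd_mat N (S - T\<^sup>T * inv_mat Z * T)"
  proof -
    have "v \<bullet> ((S - T\<^sup>T * inv_mat Z * T) *\<^sub>v v) \<ge> 0" if v: "v \<in> carrier_vec N" for v
    proof (cases "v = 0\<^sub>v N")
      case True
      then show ?thesis using Pp unfolding pd_mat_def sym_mat_def by auto
    next
      case False
      then show ?thesis using Pp v unfolding pd_mat_def by (simp add: less_imp_le)
    qed
    then show ?thesis using Pp unfolding pd_mat_def psd_mat_def by simp
  qed
  have Pc: "S - T\<^sup>T * inv_mat Z * T \<in> carrier_mat N N" "(S - T\<^sup>T * inv_mat Z * T)\<^sup>T = S - T\<^sup>T * inv_mat Z * T"
    using Pp unfolding pd_mat_def sym_mat_def by auto
  show "det (S - T\<^sup>T * inv_mat Z * T) > 0" using det_mono[OF Pc Pp] by simp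
qed

lemma F2:
  fixes S T Z Pi :: "real mat"
  assumes S: "S \<in> carrier_mat N N" and T: "T \<in> carrier_mat k N" and Zp: "pd_mat k Z"
    and Pip: "psd_mat N Pi" and dPi: "det Pi > 0"
    and L: "psd_mat (N + k) (four_block_mat (S - Pi) T\<^sup>T T Z)"
  shows "pd_mat N (S - T\<^sup>T * inv_mat Z * T)" "det Pi \<le> det (S - T\<^sup>T * inv_mat Z * T)"
proof -
  note Z = pd_inv_props[OF Zp]
  define Zi where "Zi = inv_mat Z"
  define P where "P = S - T\<^sup>T * Zi * T"
  have Pi: "Pi \<in> carrier_mat N N" and Pis: "Pi\<^sup>T = Pi" using Pip unfolding psd_mat_def sym_mat_def by auto
  have SPi: "S - Pi \<in> carrier_mat N N" using Pi by (auto intro: minus_carrier_mat)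
  have Zi: "Zi \<in> carrier_mat k k" "Z * Zi = 1\<^sub>m k" "Zi\<^sup>T = Zi" using Z unfolding Zi_def by auto
  have P: "P \<in> carrier_mat N N" unfolding P_def using T Zi by (auto intro!: minus_carrier_mat)
  have ps: "psd_mat N ((S - Pi) - T\<^sup>T * Zi * T)"
    using psd_schur_iff[OF SPi T Z(1) Zi(1) Zi(2) Z(2) Zi(3) Z(6)] L by simp
  have SPis: "(S - Pi)\<^sup>T = S - Pi" using L sym_four_block_iff[OF SPi T Z(1)] unfolding psd_mat_def by simp
  have Ss: "S\<^sup>T = S"
  proof (rule eq_matI)
    fix i j assume "i < dim_row S" "j < dim_col S"
    then show "S\<^sup>T $$ (i, j) = S $$ (i, j)"
      using arg_cong[OF SPis, of "\<lambda>M. M $$ (i,j)"] arg_cong[OF Pis, of "\<lambda>M. M $$ (i,j)"] S Pi by simp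
  qed (use S in auto)
  have Ps: "P\<^sup>T = P" unfolding P_def by (rule schur_sym[OF S T Zi(1) Ss Zi(3)])
  have Pipd: "pd_mat N Pi" using psd_det_pd[OF Pip] dPi by simp
  have le: "qf Pi v \<le> qf P v" if v: "v \<in> carrier_vec n" "v \<in> carrier_vec N" for v n
  proof -
    have "0 \<le> qf ((S - Pi) - T\<^sup>T * Zi * T) v" using ps v unfolding psd_mat_def qf_def by simp
    also have "\<dots> = qf S v - qf Pi v - (T *\<^sub>v v) \<bullet> (Zi *\<^sub>v (T *\<^sub>v v))"
      using qf_schur[OF SPi T Zi(1) v(2)] qf_minus[OF S Pi v(2)] by simp
    also have "\<dots> = qf P v - qf Pi v"
      unfolding P_def using qf_schur[OF S T Zi(1) v(2)] by simp
    finally show ?thesis by simp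
  qed
  have dm: "0 < det Pi \<and> det Pi \<le> det P" using det_mono[OF P Ps Pipd] le by blast
  then show "det Pi \<le> det (S - T\<^sup>T * inv_mat Z * T)" unfolding P_def Zi_def by simp
  have "qf P v > 0" if "v \<in> carrier_vec N" "v \<noteq> 0\<^sub>v N" for v
    using le[of v N] Pipd that unfolding pd_mat_def qf_def by fastforce
  then show "pd_mat N (S - T\<^sup>T * inv_mat Z * T)"
    unfolding pd_mat_def sym_mat_def qf_def using P Ps unfolding P_def Zi_def by simp
qed


theorem lemma2:
  fixes K nx ny ns m :: nat
    and A C D Sig1 SigT SigW :: "real mat"
  assumes K: "K \<ge> 2"
    and A: "A \<in> carrier_mat nx nx"
    and C: "C \<in> carrier_mat ny nx"
    and D: "D \<in> carrier_mat ns nx"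
    and Drank: "vec_space.rank ns D = ns"
    and Sig1: "pd_mat nx Sig1"
    and SigT: "pd_mat nx SigT"
    and SigW: "pd_mat ny SigW"
  shows
    \<comment> \<open>(i) every feasible point of the original problem: minimising over \<Pi>_K gives
        cost = (1/2) log det \<Sigma>^S_K + (1/2) (convex objective) - m/2 - (m/2) log(2\<pi>)\<close>
    "(\<forall>SigH SigZ G. orig_feasible K nx ny ns m A C D Sig1 SigT SigH SigZ G \<longrightarrow>
        (\<exists>PiK. conv_feasible K nx ny ns m A C D Sig1 SigT SigH PiK SigZ G \<and>
              cost K nx ny m A C D Sig1 SigT SigH SigZ G
                = 1/2 * log 2 (det (SigS K nx A D Sig1 SigT)) + 1/2 * conv_obj SigH PiK
                  - real m / 2 - real m / 2 * log 2 (2 * pi)) \<and>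
        (\<forall>PiK. conv_feasible K nx ny ns m A C D Sig1 SigT SigH PiK SigZ G \<longrightarrow>
              cost K nx ny m A C D Sig1 SigT SigH SigZ G
                \<le> 1/2 * log 2 (det (SigS K nx A D Sig1 SigT)) + 1/2 * conv_obj SigH PiK
                  - real m / 2 - real m / 2 * log 2 (2 * pi)))
     \<and> \<comment> \<open>(ii) every feasible point of the convex program projects to a feasible point\<close>
     (\<forall>SigH PiK SigZ G. conv_feasible K nx ny ns m A C D Sig1 SigT SigH PiK SigZ G \<longrightarrow>
        orig_feasible K nx ny ns m A C D Sig1 SigT SigH SigZ G)
     \<and> \<comment> \<open>(iii) minimisers correspond\<close>
     (\<forall>SigH SigZ G.
        (orig_feasible K nx ny ns m A C D Sig1 SigT SigH SigZ G \<and>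
         (\<forall>SigH' SigZ' G'. orig_feasible K nx ny ns m A C D Sig1 SigT SigH' SigZ' G' \<longrightarrow>
            cost K nx ny m A C D Sig1 SigT SigH SigZ G \<le> cost K nx ny m A C D Sig1 SigT SigH' SigZ' G'))
        \<longleftrightarrow>
        (\<exists>PiK. conv_feasible K nx ny ns m A C D Sig1 SigT SigH PiK SigZ G \<and>
           (\<forall>SigH' PiK' SigZ' G'. conv_feasible K nx ny ns m A C D Sig1 SigT SigH' PiK' SigZ' G' \<longrightarrow>
              conv_obj SigH PiK \<le> conv_obj SigH' PiK')))"
proof -
  define S where "S = SigS K nx A D Sig1 SigT"
  define T where "T = (\<lambda>G. SigSZ K nx ny A C D Sig1 SigT G)"
  define c0 where "c0 = real m / 2 + real m / 2 * log 2 (2 * pi)"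
  have Sc: "S \<in> carrier_mat (K * ns) (K * ns)"
    unfolding S_def SigS_def kron_id_def carrier_mat_def using D by simp
  have Tc: "T G \<in> carrier_mat (K * ny) (K * ns)" for G
    unfolding T_def SigSZ_def kron_id_def blockdiag_def carrier_mat_def using D by simp
  have condE: "SigS_cond K nx ny A C D Sig1 SigT SigZ G = S - (T G)\<^sup>T * inv_mat SigZ * T G" for SigZ G
    unfolding SigS_cond_def S_def T_def by simp
  have costE: "cost K nx ny m A C D Sig1 SigT SigH SigZ G =
      1/2 * log 2 (det S) - 1/2 * log 2 (det (S - (T G)\<^sup>T * inv_mat SigZ * T G))
      - 1/2 * log 2 (det SigH) - c0" for SigH SigZ G
    unfolding cost_def mutual_info_def diff_entropy_def condE unfolding S_def c0_def by simp
  have objE: "conv_obj SigH PiK = - log 2 (det SigH) - log 2 (det PiK)" for SigH PiK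
    unfolding conv_obj_def by simp
  have convE: "conv_feasible K nx ny ns m A C D Sig1 SigT SigH PiK SigZ G \<longleftrightarrow>
     pd_mat m SigH \<and> pd_mat (K * ny) SigZ \<and> (\<forall>k < K. G k \<in> carrier_mat ny ny) \<and>
     psd_mat (K * ns) PiK \<and> det PiK > 0 \<and>
     psd_mat (K * ns + K * ny) (four_block_mat (S - PiK) (T G)\<^sup>T (T G) SigZ)" for SigH PiK SigZ G
    unfolding conv_feasible_def S_def T_def by simp
  have origE: "orig_feasible K nx ny ns m A C D Sig1 SigT SigH SigZ G \<longleftrightarrow>
     pd_mat m SigH \<and> pd_mat (K * ny) SigZ \<and> (\<forall>k < K. G k \<in> carrier_mat ny ny) \<and>
     pd_mat (K * ns) (S - (T G)\<^sup>T * inv_mat SigZ * T G)" for SigH SigZ G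
    unfolding orig_feasible_def condE by simp
  let ?rhs = "\<lambda>SigH PiK. 1/2 * log 2 (det S) + 1/2 * conv_obj SigH PiK - real m / 2 - real m / 2 * log 2 (2 * pi)"
  have P1: "(\<exists>PiK. conv_feasible K nx ny ns m A C D Sig1 SigT SigH PiK SigZ G \<and>
              cost K nx ny m A C D Sig1 SigT SigH SigZ G = ?rhs SigH PiK) \<and>
        (\<forall>PiK. conv_feasible K nx ny ns m A C D Sig1 SigT SigH PiK SigZ G \<longrightarrow>
              cost K nx ny m A C D Sig1 SigT SigH SigZ G \<le> ?rhs SigH PiK)"
    if o: "orig_feasible K nx ny ns m A C D Sig1 SigT SigH SigZ G" for SigH SigZ G
  proof
    let ?P = "S - (T G)\<^sup>T * inv_mat SigZ * T G"
    have Zp: "pd_mat (K * ny) SigZ" and Pp: "pd_mat (K * ns) ?P" using o origE by auto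
    note f1 = F1[OF Sc Tc Zp Pp]
    have "conv_feasible K nx ny ns m A C D Sig1 SigT SigH ?P SigZ G"
      using convE o origE f1 by simp
    moreover have "cost K nx ny m A C D Sig1 SigT SigH SigZ G = ?rhs SigH ?P"
      unfolding costE objE c0_def by (simp add: algebra_simps)
    ultimately show "\<exists>PiK. conv_feasible K nx ny ns m A C D Sig1 SigT SigH PiK SigZ G \<and>
              cost K nx ny m A C D Sig1 SigT SigH SigZ G = ?rhs SigH PiK" by blast
    show "\<forall>PiK. conv_feasible K nx ny ns m A C D Sig1 SigT SigH PiK SigZ G \<longrightarrow>
              cost K nx ny m A C D Sig1 SigT SigH SigZ G \<le> ?rhs SigH PiK"
    proof (intro allI impI)
      fix PiK assume cf: "conv_feasible K nx ny ns m A C D Sig1 SigT SigH PiK SigZ G"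
      have f2: "det PiK \<le> det ?P" using F2(2)[OF Sc Tc Zp] cf convE by simp
      have "det PiK > 0" using cf convE by simp
      then have "log 2 (det PiK) \<le> log 2 (det ?P)" using f2 by simp
      then show "cost K nx ny m A C D Sig1 SigT SigH SigZ G \<le> ?rhs SigH PiK"
        unfolding costE objE c0_def by (simp add: algebra_simps)
    qed
  qed
  have P2: "orig_feasible K nx ny ns m A C D Sig1 SigT SigH SigZ G"
    if cf: "conv_feasible K nx ny ns m A C D Sig1 SigT SigH PiK SigZ G" for SigH PiK SigZ G
  proof -
    have Zp: "pd_mat (K * ny) SigZ" using cf convE by simp
    have c: "psd_mat (K * ns) PiK" "0 < det PiK"
      "psd_mat (K * ns + K * ny) (four_block_mat (S - PiK) (T G)\<^sup>T (T G) SigZ)"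
      "pd_mat m SigH" "\<forall>k<K. G k \<in> carrier_mat ny ny"
      using cf convE by auto
    show ?thesis using F2(1)[OF Sc Tc Zp c(1,2,3)] c(4,5) Zp origE by simp
  qed
  have P3: "(orig_feasible K nx ny ns m A C D Sig1 SigT SigH SigZ G \<and>
         (\<forall>SigH' SigZ' G'. orig_feasible K nx ny ns m A C D Sig1 SigT SigH' SigZ' G' \<longrightarrow>
            cost K nx ny m A C D Sig1 SigT SigH SigZ G \<le> cost K nx ny m A C D Sig1 SigT SigH' SigZ' G'))
        \<longleftrightarrow>
        (\<exists>PiK. conv_feasible K nx ny ns m A C D Sig1 SigT SigH PiK SigZ G \<and>
           (\<forall>SigH' PiK' SigZ' G'. conv_feasible K nx ny ns m A C D Sig1 SigT SigH' PiK' SigZ' G' \<longrightarrow>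
              conv_obj SigH PiK \<le> conv_obj SigH' PiK'))" for SigH SigZ G
  proof
    assume L: "orig_feasible K nx ny ns m A C D Sig1 SigT SigH SigZ G \<and>
         (\<forall>SigH' SigZ' G'. orig_feasible K nx ny ns m A C D Sig1 SigT SigH' SigZ' G' \<longrightarrow>
            cost K nx ny m A C D Sig1 SigT SigH SigZ G \<le> cost K nx ny m A C D Sig1 SigT SigH' SigZ' G')"
    then obtain PiK where cf: "conv_feasible K nx ny ns m A C D Sig1 SigT SigH PiK SigZ G"
      and ce: "cost K nx ny m A C D Sig1 SigT SigH SigZ G = ?rhs SigH PiK" using P1 by blast
    have "conv_obj SigH PiK \<le> conv_obj SigH' PiK'"
      if cf': "conv_feasible K nx ny ns m A C D Sig1 SigT SigH' PiK' SigZ' G'" for SigH' PiK' SigZ' G'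
    proof -
      have o': "orig_feasible K nx ny ns m A C D Sig1 SigT SigH' SigZ' G'" by (rule P2[OF cf'])
      have "cost K nx ny m A C D Sig1 SigT SigH' SigZ' G' \<le> ?rhs SigH' PiK'" using P1[OF o'] cf' by blast
      moreover have "cost K nx ny m A C D Sig1 SigT SigH SigZ G \<le> cost K nx ny m A C D Sig1 SigT SigH' SigZ' G'"
        using L o' by blast
      ultimately show ?thesis using ce by simp
    qed
    then show "\<exists>PiK. conv_feasible K nx ny ns m A C D Sig1 SigT SigH PiK SigZ G \<and>
           (\<forall>SigH' PiK' SigZ' G'. conv_feasible K nx ny ns m A C D Sig1 SigT SigH' PiK' SigZ' G' \<longrightarrow>
              conv_obj SigH PiK \<le> conv_obj SigH' PiK')" using cf by blast
  next
    assume R: "\<exists>PiK. conv_feasible K nx ny ns m A C D Sig1 SigT SigH PiK SigZ G \<and>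
           (\<forall>SigH' PiK' SigZ' G'. conv_feasible K nx ny ns m A C D Sig1 SigT SigH' PiK' SigZ' G' \<longrightarrow>
              conv_obj SigH PiK \<le> conv_obj SigH' PiK')"
    then obtain PiK where cf: "conv_feasible K nx ny ns m A C D Sig1 SigT SigH PiK SigZ G"
      and opt: "\<And>SigH' PiK' SigZ' G'. conv_feasible K nx ny ns m A C D Sig1 SigT SigH' PiK' SigZ' G' \<Longrightarrow>
              conv_obj SigH PiK \<le> conv_obj SigH' PiK'" by blast
    have o: "orig_feasible K nx ny ns m A C D Sig1 SigT SigH SigZ G" by (rule P2[OF cf])
    have c1: "cost K nx ny m A C D Sig1 SigT SigH SigZ G \<le> ?rhs SigH PiK" using P1[OF o] cf by blast
    have "cost K nx ny m A C D Sig1 SigT SigH SigZ G \<le> cost K nx ny m A C D Sig1 SigT SigH' SigZ' G'"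
      if o': "orig_feasible K nx ny ns m A C D Sig1 SigT SigH' SigZ' G'" for SigH' SigZ' G'
    proof -
      obtain PiK' where cf': "conv_feasible K nx ny ns m A C D Sig1 SigT SigH' PiK' SigZ' G'"
        and ce': "cost K nx ny m A C D Sig1 SigT SigH' SigZ' G' = ?rhs SigH' PiK'" using P1[OF o'] by blast
      show ?thesis using c1 ce' opt[OF cf'] by simp
    qed
    then show "orig_feasible K nx ny ns m A C D Sig1 SigT SigH SigZ G \<and>
         (\<forall>SigH' SigZ' G'. orig_feasible K nx ny ns m A C D Sig1 SigT SigH' SigZ' G' \<longrightarrow>
            cost K nx ny m A C D Sig1 SigT SigH SigZ G \<le> cost K nx ny m A C D Sig1 SigT SigH' SigZ' G')"
      using o by blast
  qed
  show ?thesis using P1 P2 P3 unfolding S_def by blast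
qed

end
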